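(* Let $k$ be an odd integer with $k\ge 5$, let $D$ be a strong $k$-quasi-transitive digraph with $\mathrm{diam}(D)\ge k+2$, let $u,v\in V(D)$ with $d(u,v)=k+2$, and let $P=x_0x_1\ldots x_{k+2}$ be a shortest $(u,v)$-path (so $x_0=u$, $x_{k+2}=v$). Let $O(P)=\{x_1,x_3,\ldots,x_{k+2}\}$ and $E(P)=\{x_0,x_2,\ldots,x_{k+1}\}$. Let $x_t,x_s\in V(P)$ with $s>t$. Then: (1) every vertex of $O(P)$ is adjacent to every vertex of $E(P)$; i.e. $D[V(P)]$ contains as a subdigraph a semicomplete bipartite digraph with bipartition $(O(P),E(P))$; (2) if $s$ and $t$ have different parity, there is a path of length $k-2$ from $x_s$ to $x_t$ in $D[V(P)]$; moreover, for any two distinct vertices $x,y\in V(D)\setminus V(P)$, if $y\rightarrow x_s$ and $x_t\rightarrow x$, then $x$ and $y$ are adjacent; (3) if $s$ and $t$ have the same parity, there is a path of length $k-1$ from $x_s$ to $x_t$ in $D[V(P)]$; moreover, for any $x\in V(D)\setminus V(P)$: if $x\rightarrow x_s$, then $x$ and $x_t$ are adjacent, and $x\rightarrow x_t$ if $s\ge t+4$; if $x_t\rightarrow x$, then $x$ and $x_s$ are adjacent, and $x_s\rightarrow x$ if $s\ge t+4$.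
   Context: All digraphs are finite, without loops or multiple arcs (opposite arcs allowed). $x\rightarrow y$ means $xy\in A(D)$; $x,y$ are adjacent if $x\rightarrow y$ or $y\rightarrow x$. For $k\ge 2$, $D$ is $k$-quasi-transitive if for every path $x_0x_1\ldots x_k$ of length $k$, $x_0$ and $x_k$ are adjacent. $d(x,y)$ is the length of a shortest $(x,y)$-path, $\mathrm{diam}(D)=\max_{x,y}d(x,y)$. $D[S]$ is the induced subdigraph. A semicomplete bipartite digraph has a bipartition $(X,Y)$ with no arcs inside the parts and every vertex of $X$ adjacent to every vertex of $Y$. *)

theory Defs
  imports Main
begin

definition digraph :: "'a set \<Rightarrow> ('a \<times> 'a) set \<Rightarrow> bool" where
  "digraph V A \<longleftrightarrow> finite V \<and> A \<subseteq> V \<times> V \<and> (\<forall>x. (x, x) \<notin> A)"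

definition adjacent :: "('a \<times> 'a) set \<Rightarrow> 'a \<Rightarrow> 'a \<Rightarrow> bool" where
  "adjacent A x y \<longleftrightarrow> (x, y) \<in> A \<or> (y, x) \<in> A"

definition is_path :: "('a \<times> 'a) set \<Rightarrow> 'a list \<Rightarrow> bool" where
  "is_path A p \<longleftrightarrow> p \<noteq> [] \<and> distinct p \<and>
     (\<forall>i. Suc i < length p \<longrightarrow> (p ! i, p ! Suc i) \<in> A)"

definition path_of_len :: "('a \<times> 'a) set \<Rightarrow> 'a \<Rightarrow> 'a \<Rightarrow> nat \<Rightarrow> 'a list \<Rightarrow> bool" where
  "path_of_len A x y n p \<longleftrightarrow> is_path A p \<and> hd p = x \<and> last p = y \<and> length p = Suc n"

definition induced_arcs :: "('a \<times> 'a) set \<Rightarrow> 'a set \<Rightarrow> ('a \<times> 'a) set" where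
  "induced_arcs A S = A \<inter> (S \<times> S)"

definition strong :: "'a set \<Rightarrow> ('a \<times> 'a) set \<Rightarrow> bool" where
  "strong V A \<longleftrightarrow> (\<forall>x\<in>V. \<forall>y\<in>V. \<exists>n p. path_of_len A x y n p)"

definition k_quasi_transitive :: "nat \<Rightarrow> ('a \<times> 'a) set \<Rightarrow> bool" where
  "k_quasi_transitive k A \<longleftrightarrow>
     (\<forall>p. is_path A p \<and> length p = Suc k \<longrightarrow> adjacent A (hd p) (last p))"

text \<open>Distance: length of a shortest (x,y)-path (used only for strong digraphs,
  where such a path always exists).\<close>
definition dist :: "('a \<times> 'a) set \<Rightarrow> 'a \<Rightarrow> 'a \<Rightarrow> nat" where
  "dist A x y = (LEAST n. \<exists>p. path_of_len A x y n p)"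

definition diam :: "'a set \<Rightarrow> ('a \<times> 'a) set \<Rightarrow> nat" where
  "diam V A = Max {dist A x y | x y. x \<in> V \<and> y \<in> V}"

end

theory Submission imports Defs begin

lemma is_path_iff:
  "is_path A q \<longleftrightarrow> q \<noteq> [] \<and> distinct q \<and> successively (\<lambda>x y. (x, y) \<in> A) q"
  unfolding is_path_def successively_conv_nth by blast

locale lem =
  fixes A :: "('a \<times> 'a) set" and k :: nat and u v :: 'a and P :: "'a list"
  assumes ko: "odd k" and k5: "k \<ge> 5"
    and qt: "k_quasi_transitive k A"
    and duv: "dist A u v = k + 2"
    and P: "path_of_len A u v (k + 2) P"
begin

abbreviation R :: "nat \<Rightarrow> nat \<Rightarrow> bool" where "R i j \<equiv> (P ! i, P ! j) \<in> A"

lemma lenP: "length P = k + 3" using P by (simp add: path_of_len_def)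
lemma distP: "distinct P" using P by (simp add: path_of_len_def is_path_def)
lemma Pne: "P \<noteq> []" using lenP by auto
lemma P0: "P ! 0 = u" using P Pne by (simp add: path_of_len_def hd_conv_nth)
lemma Pn: "P ! (k+2) = v" using P Pne lenP by (simp add: path_of_len_def last_conv_nth)

definition iv :: "nat \<Rightarrow> nat \<Rightarrow> nat list" where "iv a b = [a..<Suc b]"
lemma iv_ne[simp]: "a \<le> b \<Longrightarrow> iv a b \<noteq> []" by (simp add: iv_def)
lemma iv_hd[simp]: "a \<le> b \<Longrightarrow> hd (iv a b) = a" by (simp add: iv_def hd_upt del: upt_Suc)
lemma iv_last[simp]: "a \<le> b \<Longrightarrow> last (iv a b) = b" by (simp add: iv_def)
lemma iv_set[simp]: "set (iv a b) = {a..b}" by (auto simp: iv_def)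
lemma iv_len[simp]: "length (iv a b) = Suc b - a" by (simp add: iv_def del: upt_Suc)
lemma iv_dist[simp]: "distinct (iv a b)" by (simp add: iv_def)
lemma sR_app: "successively Q l1 \<Longrightarrow> successively Q l2 \<Longrightarrow> l1 \<noteq> [] \<Longrightarrow> l2 \<noteq> [] \<Longrightarrow> Q (last l1) (hd l2) \<Longrightarrow> successively Q (l1 @ l2)"
  by (simp add: successively_append_iff)
lemma fwd: "i < k + 2 \<Longrightarrow> R i (Suc i)" using P lenP by (auto simp: path_of_len_def is_path_def)

lemma dist_le: "path_of_len A u v m q \<Longrightarrow> k + 2 \<le> m"
  using duv unfolding dist_def by (metis (mono_tags, lifting) Least_le)

lemma sR_upt: "b \<le> k + 3 \<Longrightarrow> successively R [a..<b]"
  unfolding successively_conv_nth by (auto intro: fwd)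
lemma sR_iv[simp]: "b \<le> k + 2 \<Longrightarrow> successively R (iv a b)"
  unfolding iv_def by (rule sR_upt) simp

lemma ipath:
  assumes "l \<noteq> []" "distinct l" "set l \<subseteq> {..k+2}" "successively R l"
  shows "is_path A (map ((!) P) l)" "is_path (induced_arcs A (set P)) (map ((!) P) l)"
proof -
  have inj: "inj_on ((!) P) (set l)" using assms(3) lenP distP by (intro inj_on_nth) auto
  have d: "distinct (map ((!) P) l)" using assms(2) inj by (simp add: distinct_map)
  show "is_path A (map ((!) P) l)" unfolding is_path_iff successively_map using assms d by simp
  have "successively (\<lambda>x y. (x, y) \<in> induced_arcs A (set P)) (map ((!) P) l)"
    unfolding successively_map using assms(3,4) lenP
    by (rule_tac successively_mono[OF assms(4)]) (auto simp: induced_arcs_def)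
  then show "is_path (induced_arcs A (set P)) (map ((!) P) l)" unfolding is_path_iff using assms d by simp
qed

lemma noshort: assumes "i + 2 \<le> j" "j \<le> k + 2" shows "\<not> R i j"
proof
  assume r: "R i j"
  let ?l = "iv 0 i @ iv j (k+2)"
  have "is_path A (map ((!) P) ?l)"
    using assms r by (intro ipath sR_app) auto
  then have "path_of_len A u v (length ?l - 1) (map ((!) P) ?l)"
    using assms P0 Pn by (auto simp: path_of_len_def hd_map last_map)
  from dist_le[OF this] assms show False by simp
qed

lemma kadj:
  assumes "l \<noteq> []" "distinct l" "set l \<subseteq> {..k+2}" "successively R l" "length l = Suc k"
  shows "adjacent A (P ! hd l) (P ! last l)"
proof -
  have "is_path A (map ((!) P) l)" using assms by (intro ipath)
  then have "adjacent A (hd (map ((!) P) l)) (last (map ((!) P) l))"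
    using qt assms unfolding k_quasi_transitive_def by simp
  then show ?thesis using assms(1) by (simp add: hd_map last_map)
qed

lemma kback:
  assumes "l \<noteq> []" "distinct l" "set l \<subseteq> {..k+2}" "successively R l" "length l = Suc k"
    "{hd l, last l} = {i, j}" "i + 2 \<le> j" "j \<le> k + 2"
  shows "R j i"
proof -
  have "adjacent A (P ! i) (P ! j)" using kadj[OF assms(1-5)] assms(6)
    by (auto simp: doubleton_eq_iff adjacent_def)
  with noshort[OF assms(7,8)] show ?thesis by (simp add: adjacent_def)
qed

end
context lem begin

lemma kback3:
  assumes "la \<le> lb" "ma \<le> mb" "ra \<le> rb" "lb \<le> k+2" "mb \<le> k+2" "rb \<le> k+2"
    "{la..lb} \<inter> {ma..mb} = {}" "{la..lb} \<inter> {ra..rb} = {}" "{ma..mb} \<inter> {ra..rb} = {}"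
    "R lb ma" "R mb ra" "(Suc lb - la) + (Suc mb - ma) + (Suc rb - ra) = Suc k"
    "{la, rb} = {i, j}" "i + 2 \<le> j" "j \<le> k + 2"
  shows "R j i"
proof (rule kback[where l="iv la lb @ iv ma mb @ iv ra rb"])
  show "successively R (iv la lb @ iv ma mb @ iv ra rb)"
    using assms by (intro sR_app) auto
qed (use assms in \<open>auto simp: Int_commute\<close>)

lemma kback2:
  assumes "la \<le> lb" "ra \<le> rb" "lb \<le> k+2" "rb \<le> k+2"
    "{la..lb} \<inter> {ra..rb} = {}"
    "R lb ra" "(Suc lb - la) + (Suc rb - ra) = Suc k"
    "{la, rb} = {i, j}" "i + 2 \<le> j" "j \<le> k + 2"
  shows "R j i"
proof (rule kback[where l="iv la lb @ iv ra rb"])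
  show "successively R (iv la lb @ iv ra rb)"
    using assms by (intro sR_app) auto
qed (use assms in \<open>auto simp: Int_commute\<close>)

lemma stepB: "i \<le> 2 \<Longrightarrow> R (i + k) i"
  using k5 by (intro kback[where l="iv i (i+k)"]) auto

lemma stepC: "R (k+2) 0"
  by (rule kback3[where la="k+2" and lb="k+2" and ma=2 and mb=k and ra=0 and rb=0])
     (use k5 stepB[of 2] stepB[of 0] in \<open>auto simp: add.commute\<close>)

lemma stepD: "i + 3 \<le> k + 2 \<Longrightarrow> R (i+3) i"
  by (rule kback2[where la="i+3" and lb="k+2" and ra=0 and rb=i])
     (use k5 stepC in \<open>auto\<close>)

lemma stepE: assumes "i \<le> 1" shows "odd d \<Longrightarrow> 3 \<le> d \<Longrightarrow> i + d \<le> k + 2 \<Longrightarrow> R (i + d) i"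
proof (induction d rule: less_induct)
  case (less d)
  show ?case
  proof (cases "d = 3")
    case True then show ?thesis using stepD less by simp
  next
    case False
    then have d5: "d \<ge> 5" using less by presburger
    have ih: "R (i + (d - 2)) i" using less d5 by (intro less.IH) auto
    show ?thesis
      by (rule kback3[where la="i+d" and lb="k+2" and ma=2 and mb="i+d-2" and ra=i and rb=i])
         (use k5 d5 assms less ih stepB[of 2] in \<open>auto simp: add.commute\<close>)
  qed
qed

lemma stepF: assumes "j = k+1 \<or> j = k+2"
  shows "odd d \<Longrightarrow> 3 \<le> d \<Longrightarrow> d \<le> j \<Longrightarrow> R j (j - d)"
proof (induction d rule: less_induct)
  case (less d)
  show ?case
  proof (cases "d = 3")
    case True then show ?thesis using stepD[of "j-3"] less assms by auto
  next
    case False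
    then have d5: "d \<ge> 5" using less by presburger
    have ih: "R j (j - (d - 2))" using less d5 by (intro less.IH) auto
    have e: "j - (d - 2) = j - d + 2" using d5 less by simp
    show ?thesis
      by (rule kback3[where la=j and lb=j and ma="j-d+2" and mb=k and ra=0 and rb="j-d"])
         (use k5 d5 assms less ih e stepB[of 0] in \<open>auto\<close>)
  qed
qed

lemma backarc: assumes "odd (j - i)" "i + 3 \<le> j" "j \<le> k + 2" shows "R j i"
proof -
  consider "j - i = 3" | "i \<le> 1" | "j \<ge> k + 1" | "j - i \<ge> 5" "i \<ge> 2" "j \<le> k"
  proof -
    have "j - i \<noteq> 4" using assms(1) by (metis even_numeral)
    then show "(j - i = 3 \<Longrightarrow> thesis) \<Longrightarrow> (i \<le> 1 \<Longrightarrow> thesis) \<Longrightarrow> (j \<ge> k + 1 \<Longrightarrow> thesis) \<Longrightarrow> (j - i \<ge> 5 \<Longrightarrow> i \<ge> 2 \<Longrightarrow> j \<le> k \<Longrightarrow> thesis) \<Longrightarrow> thesis"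
      using assms by linarith
  qed
  then show ?thesis
  proof cases
    case 1 then have "j = i + 3" by simp
    then show ?thesis using stepD[of i] assms by simp
  next
    case 2 then show ?thesis using stepE[of i "j - i"] assms by simp
  next
    case 3 then have "j = k+1 \<or> j = k+2" using assms by linarith
    then show ?thesis using stepF[of j "j - i"] assms by simp
  next
    case 4
    show ?thesis
    proof (cases "odd i")
      case True
      have r1: "R (k+2) (i+1)" using stepF[of "k+2" "k+1-i"] 4 True assms k5 ko by auto
      have r2: "R (j-3) 0" using stepE[of 0 "j-3"] 4 True assms k5 ko by auto
      show ?thesis
        by (rule kback3[where la=j and lb="k+2" and ma="i+1" and mb="j-3" and ra=0 and rb=i])
           (use 4 r1 r2 assms in \<open>auto\<close>)
    next
      case False
      have r1: "R (k+1) (i+1)" using stepF[of "k+1" "k-i"] 4 False assms k5 ko by auto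
      have e: "Suc (j - 2) = j - 1" "1 + (j - 2) = j - 1" using 4 by auto
      have r2: "R (j-1) 1" using stepE[of 1 "j-2"] 4 False assms k5 ko e by simp
      show ?thesis
        by (rule kback3[where la=j and lb="k+1" and ma="i+1" and mb="j-1" and ra=1 and rb=i])
           (use 4 r1 r2 assms in \<open>auto\<close>)
    qed
  qed
qed

end
context lem begin

abbreviation "IA \<equiv> induced_arcs A (set P)"

lemma mk3:
  assumes "la \<le> lb" "ma \<le> mb" "ra \<le> rb" "lb \<le> k+2" "mb \<le> k+2" "rb \<le> k+2"
    "{la..lb} \<inter> {ma..mb} = {}" "{la..lb} \<inter> {ra..rb} = {}" "{ma..mb} \<inter> {ra..rb} = {}"
    "R lb ma" "R mb ra" "(Suc lb - la) + (Suc mb - ma) + (Suc rb - ra) = Suc m"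
  shows "\<exists>q. path_of_len IA (P ! la) (P ! rb) m q"
proof -
  let ?l = "iv la lb @ iv ma mb @ iv ra rb"
  have "is_path IA (map ((!) P) ?l)"
    using assms by (intro ipath sR_app) (auto simp: Int_commute)
  then have "path_of_len IA (P ! la) (P ! rb) m (map ((!) P) ?l)"
    using assms by (simp add: path_of_len_def hd_map last_map)
  then show ?thesis by blast
qed

lemma mk2:
  assumes "la \<le> lb" "ra \<le> rb" "lb \<le> k+2" "rb \<le> k+2"
    "{la..lb} \<inter> {ra..rb} = {}"
    "R lb ra" "(Suc lb - la) + (Suc rb - ra) = Suc m"
  shows "\<exists>q. path_of_len IA (P ! la) (P ! rb) m q"
proof -
  let ?l = "iv la lb @ iv ra rb"
  have "is_path IA (map ((!) P) ?l)"
    using assms by (intro ipath sR_app) (auto simp: Int_commute)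
  then have "path_of_len IA (P ! la) (P ! rb) m (map ((!) P) ?l)"
    using assms by (simp add: path_of_len_def hd_map last_map)
  then show ?thesis by blast
qed

lemma path_odd: assumes "t < s" "s \<le> k + 2" "odd (s - t)"
  shows "\<exists>q. path_of_len IA (P ! s) (P ! t) (k - 2) q"
proof -
  consider "s - t = 1" | "s - t = 3" | "s - t = 5" | "s - t \<ge> 7" using assms by atomize_elim presburger
  then show ?thesis
  proof cases
    case 1
    show ?thesis
    proof (cases "s + 2 \<ge> k")
      case True
      have r: "R s (s + 2 - k)" using assms 1 True k5 ko by (intro backarc) presburger+
      show ?thesis by (rule mk2[where lb=s and ra="s+2-k"]) (use assms 1 True r k5 in auto)
    next
      case False
      have r: "R (k-2) 0" using assms 1 False k5 ko by (intro backarc) presburger+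
      show ?thesis by (rule mk2[where lb="k-2" and ra=0]) (use assms 1 False r k5 in auto)
    qed
  next
    case 2
    show ?thesis
    proof (cases "t \<ge> 2")
      case True
      have r: "R (k+2) 2" using assms 2 True k5 ko by (intro backarc) presburger+
      show ?thesis by (rule mk2[where lb="k+2" and ra=2]) (use assms 2 True r k5 in auto)
    next
      case False
      have r: "R k 0" using assms 2 False k5 ko by (intro backarc) presburger+
      show ?thesis by (rule mk2[where lb="k" and ra=0]) (use assms 2 False r k5 in auto)
    qed
  next
    case 3
    have r: "R (k+2) 0" using assms 3 k5 ko by (intro backarc) presburger+
    show ?thesis by (rule mk2[where lb="k+2" and ra=0]) (use assms 3 r k5 in auto)
  next
    case 4
    show ?thesis
    proof (cases "even t")
      case True
      have r1: "R (k+2) (t+2)" using assms 4 True k5 ko by (intro backarc) presburger+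
      have r2: "R (s-4) 0" using assms 4 True k5 ko by (intro backarc) presburger+
      show ?thesis by (rule mk3[where lb="k+2" and ma="t+2" and mb="s-4" and ra=0])
                      (use assms 4 r1 r2 k5 in auto)
    next
      case False
      have r1: "R (k+2) (t+1)" using assms 4 False k5 ko by (intro backarc) presburger+
      have r2: "R (s-5) 0" using assms 4 False k5 ko by (intro backarc) presburger+
      show ?thesis by (rule mk3[where lb="k+2" and ma="t+1" and mb="s-5" and ra=0])
                      (use assms 4 r1 r2 k5 in auto)
    qed
  qed
qed

lemma path_even: assumes "t < s" "s \<le> k + 2" "even (s - t)"
  shows "\<exists>q. path_of_len IA (P ! s) (P ! t) (k - 1) q"
proof -
  consider "s - t = 2" | "s - t = 4" | "s - t \<ge> 6" using assms by atomize_elim presburger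
  then show ?thesis
  proof cases
    case 1
    show ?thesis
    proof (cases "t \<ge> 2")
      case True
      have r: "R (k+2) 2" using assms 1 True k5 ko by (intro backarc) presburger+
      show ?thesis by (rule mk2[where lb="k+2" and ra=2]) (use assms 1 True r k5 in auto)
    next
      case False
      have r: "R k 0" using assms 1 False k5 ko by (intro backarc) presburger+
      show ?thesis by (rule mk2[where lb="k" and ra=0]) (use assms 1 False r k5 in auto)
    qed
  next
    case 2
    have r: "R (k+2) 0" using assms 2 k5 ko by (intro backarc) presburger+
    show ?thesis by (rule mk2[where lb="k+2" and ra=0]) (use assms 2 r k5 in auto)
  next
    case 3
    show ?thesis
    proof (cases "even t")
      case True
      have r1: "R (k+2) (t+2)" using assms 3 True k5 ko by (intro backarc) presburger+
      have r2: "R (s-3) 0" using assms 3 True k5 ko by (intro backarc) presburger+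
      show ?thesis by (rule mk3[where lb="k+2" and ma="t+2" and mb="s-3" and ra=0])
                      (use assms 3 r1 r2 k5 in auto)
    next
      case False
      have r1: "R (k+2) (t+1)" using assms 3 False k5 ko by (intro backarc) presburger+
      have r2: "R (s-4) 0" using assms 3 False k5 ko by (intro backarc) presburger+
      show ?thesis by (rule mk3[where lb="k+2" and ma="t+1" and mb="s-4" and ra=0])
                      (use assms 3 r1 r2 k5 in auto)
    qed
  qed
qed

end
context lem begin

lemma adj_part: assumes "i \<le> k+2" "j \<le> k+2" "odd i" "even j" shows "adjacent A (P ! i) (P ! j)"
proof -
  consider "j = i + 1" | "i = j + 1" | "i + 3 \<le> j" | "j + 3 \<le> i" using assms by atomize_elim presburger
  then show ?thesis
  proof cases
    case 1 then show ?thesis using fwd[of i] assms by (auto simp: adjacent_def)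
  next
    case 2 then show ?thesis using fwd[of j] assms by (auto simp: adjacent_def)
  next
    case 3 then have "R j i" using assms by (intro backarc) presburger+
    then show ?thesis by (auto simp: adjacent_def)
  next
    case 4 then have "R i j" using assms by (intro backarc) presburger+
    then show ?thesis by (auto simp: adjacent_def)
  qed
qed

lemma IA_sub: "IA \<subseteq> A" by (auto simp: induced_arcs_def)

lemma path_in_P: assumes "is_path IA q" "length q \<ge> 2" shows "set q \<subseteq> set P"
proof
  fix z assume "z \<in> set q"
  then obtain i where i: "i < length q" "q ! i = z" by (auto simp: in_set_conv_nth)
  show "z \<in> set P"
  proof (cases "Suc i < length q")
    case True
    then have "(q ! i, q ! Suc i) \<in> IA" using assms(1) by (auto simp: is_path_def)
    then show ?thesis using i by (auto simp: induced_arcs_def)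
  next
    case False
    then have "Suc (i - 1) < length q" "i = Suc (i - 1)" using assms(2) i by auto
    then have "(q ! (i - 1), q ! i) \<in> IA" using assms(1) unfolding is_path_def by metis
    then show ?thesis using i by (auto simp: induced_arcs_def)
  qed
qed

lemma detour: assumes "x \<notin> set P" "(P ! t, x) \<in> A" "(x, P ! s) \<in> A" "t + 3 \<le> s" "s \<le> k + 2"
  shows False
proof -
  let ?l1 = "map ((!) P) (iv 0 t)" and ?l2 = "map ((!) P) (iv s (k+2))"
  have inj: "inj_on ((!) P) (set (iv 0 t @ iv s (k+2)))" using assms lenP distP by (intro inj_on_nth) auto
  have d: "distinct (?l1 @ ?l2)"
    using inj assms by (simp only: map_append[symmetric] distinct_map) auto
  have "set ?l1 \<subseteq> set P" "set ?l2 \<subseteq> set P" using lenP assms by (auto intro!: nth_mem)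
  then have xs: "x \<notin> set ?l1" "x \<notin> set ?l2" using assms(1) by auto
  have s1: "successively (\<lambda>x y. (x, y) \<in> A) ?l1" "successively (\<lambda>x y. (x, y) \<in> A) ?l2"
    using assms by (auto simp: successively_map)
  have hl: "hd ?l2 = P ! s" "last ?l1 = P ! t" "?l2 \<noteq> []" "?l1 \<noteq> []" using assms
    by (auto simp: hd_map last_map)
  have "is_path A (?l1 @ [x] @ ?l2)"
    unfolding is_path_iff using d xs s1 assms hl
    by (auto simp: successively_append_iff successively_Cons)
  then have "path_of_len A u v (t + k + 4 - s) (?l1 @ [x] @ ?l2)"
    using assms P0 Pn by (auto simp: path_of_len_def hd_map last_map)
  from dist_le[OF this] assms show False by simp
qed

lemma main:
  assumes ts: "t < s" "s \<le> k + 2"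
  shows
    "(\<forall>i j. i \<le> k + 2 \<and> j \<le> k + 2 \<and> odd i \<and> even j \<longrightarrow> adjacent A (P ! i) (P ! j))
     \<and> (odd (s + t) \<longrightarrow>
          (\<exists>q. path_of_len (induced_arcs A (set P)) (P ! s) (P ! t) (k - 2) q)
        \<and> (\<forall>x y. x \<in> V - set P \<and> y \<in> V - set P \<and> x \<noteq> y
               \<and> (y, P ! s) \<in> A \<and> (P ! t, x) \<in> A \<longrightarrow> adjacent A x y))
     \<and> (even (s + t) \<longrightarrow>
          (\<exists>q. path_of_len (induced_arcs A (set P)) (P ! s) (P ! t) (k - 1) q)
        \<and> (\<forall>x \<in> V - set P.
              ((x, P ! s) \<in> A \<longrightarrow> adjacent A x (P ! t) \<and> (s \<ge> t + 4 \<longrightarrow> (x, P ! t) \<in> A))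
            \<and> ((P ! t, x) \<in> A \<longrightarrow> adjacent A x (P ! s) \<and> (s \<ge> t + 4 \<longrightarrow> (P ! s, x) \<in> A))))"
proof (intro conjI impI)
  show "\<forall>i j. i \<le> k + 2 \<and> j \<le> k + 2 \<and> odd i \<and> even j \<longrightarrow> adjacent A (P ! i) (P ! j)"
    using adj_part by blast
next
  assume o: "odd (s + t)"
  then have o': "odd (s - t)" using ts by presburger
  obtain q where q: "path_of_len IA (P ! s) (P ! t) (k - 2) q" using path_odd[OF ts o'] by blast
  then show "\<exists>q. path_of_len IA (P ! s) (P ! t) (k - 2) q" by blast
  show "\<forall>x y. x \<in> V - set P \<and> y \<in> V - set P \<and> x \<noteq> y
               \<and> (y, P ! s) \<in> A \<and> (P ! t, x) \<in> A \<longrightarrow> adjacent A x y"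
  proof (intro allI impI)
    fix x y assume h: "x \<in> V - set P \<and> y \<in> V - set P \<and> x \<noteq> y \<and> (y, P ! s) \<in> A \<and> (P ! t, x) \<in> A"
    have qp: "is_path IA q" "hd q = P ! s" "last q = P ! t" "length q = k - 1"
      using q k5 by (auto simp: path_of_len_def)
    have sub: "set q \<subseteq> set P" using path_in_P[OF qp(1)] qp k5 by auto
    have sq: "successively (\<lambda>x y. (x, y) \<in> A) q"
      using qp(1) IA_sub unfolding is_path_iff by (auto elim: successively_mono)
    have "is_path A (y # q @ [x])"
      unfolding is_path_iff using qp sub sq h
      by (auto simp: successively_append_iff successively_Cons is_path_iff)
    moreover have "length (y # q @ [x]) = Suc k" using qp k5 by simp
    ultimately have "adjacent A (hd (y # q @ [x])) (last (y # q @ [x]))"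
      using qt unfolding k_quasi_transitive_def by blast
    then show "adjacent A x y" by (auto simp: adjacent_def)
  qed
next
  assume e: "even (s + t)"
  then have e': "even (s - t)" using ts by presburger
  obtain q where q: "path_of_len IA (P ! s) (P ! t) (k - 1) q" using path_even[OF ts e'] by blast
  then show "\<exists>q. path_of_len IA (P ! s) (P ! t) (k - 1) q" by blast
  have qp: "is_path IA q" "hd q = P ! s" "last q = P ! t" "length q = k"
    using q k5 by (auto simp: path_of_len_def)
  have sub: "set q \<subseteq> set P" using path_in_P[OF qp(1)] qp k5 by auto
  have sq: "successively (\<lambda>x y. (x, y) \<in> A) q"
    using qp(1) IA_sub unfolding is_path_iff by (auto elim: successively_mono)
  have qne: "q \<noteq> []" using qp k5 by auto
  have ts2: "t + 2 \<le> s" using ts e' by presburger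
  show "\<forall>x \<in> V - set P.
              ((x, P ! s) \<in> A \<longrightarrow> adjacent A x (P ! t) \<and> (s \<ge> t + 4 \<longrightarrow> (x, P ! t) \<in> A))
            \<and> ((P ! t, x) \<in> A \<longrightarrow> adjacent A x (P ! s) \<and> (s \<ge> t + 4 \<longrightarrow> (P ! s, x) \<in> A))"
  proof (intro ballI conjI impI)
    fix x assume x: "x \<in> V - set P"
    {
      assume a: "(x, P ! s) \<in> A"
      have "is_path A (x # q)"
        unfolding is_path_iff using qp sub sq x a
        by (auto simp: successively_Cons is_path_iff)
      moreover have "length (x # q) = Suc k" using qp by simp
      ultimately have "adjacent A (hd (x # q)) (last (x # q))"
        using qt unfolding k_quasi_transitive_def by blast
      moreover have "q \<noteq> []" using qp k5 by auto
      ultimately show ad: "adjacent A x (P ! t)" using qp by simp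
      assume "s \<ge> t + 4"
      then show "(x, P ! t) \<in> A" using ad detour[of x t s] x a ts by (auto simp: adjacent_def)
    }
    {
      assume a: "(P ! t, x) \<in> A"
      have "is_path A (q @ [x])"
        unfolding is_path_iff using qp sub sq x a
        by (auto simp: successively_append_iff is_path_iff)
      moreover have "length (q @ [x]) = Suc k" using qp by simp
      ultimately have "adjacent A (hd (q @ [x])) (last (q @ [x]))"
        using qt unfolding k_quasi_transitive_def by blast
      then show ad: "adjacent A x (P ! s)" using qp qne by (auto simp: adjacent_def)
      assume "s \<ge> t + 4"
      then show "(P ! s, x) \<in> A" using ad detour[of x t s] x a ts by (auto simp: adjacent_def)
    }
  qed
qed

end
theorem lemma2p3:
  fixes V :: "'a set" and A :: "('a \<times> 'a) set" and k :: nat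
    and u v :: 'a and P :: "'a list" and s t :: nat
  assumes D: "digraph V A"
    and k: "odd k" "k \<ge> 5"
    and str: "strong V A"
    and qt: "k_quasi_transitive k A"
    and dm: "diam V A \<ge> k + 2"
    and uv: "u \<in> V" "v \<in> V" "dist A u v = k + 2"
    and P: "path_of_len A u v (k + 2) P"
    and ts: "t < s" "s \<le> k + 2"
  shows
    "(\<forall>i j. i \<le> k + 2 \<and> j \<le> k + 2 \<and> odd i \<and> even j \<longrightarrow> adjacent A (P ! i) (P ! j))
     \<and> (odd (s + t) \<longrightarrow>
          (\<exists>q. path_of_len (induced_arcs A (set P)) (P ! s) (P ! t) (k - 2) q)
        \<and> (\<forall>x y. x \<in> V - set P \<and> y \<in> V - set P \<and> x \<noteq> y
               \<and> (y, P ! s) \<in> A \<and> (P ! t, x) \<in> A \<longrightarrow> adjacent A x y))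
     \<and> (even (s + t) \<longrightarrow>
          (\<exists>q. path_of_len (induced_arcs A (set P)) (P ! s) (P ! t) (k - 1) q)
        \<and> (\<forall>x \<in> V - set P.
              ((x, P ! s) \<in> A \<longrightarrow> adjacent A x (P ! t) \<and> (s \<ge> t + 4 \<longrightarrow> (x, P ! t) \<in> A))
            \<and> ((P ! t, x) \<in> A \<longrightarrow> adjacent A x (P ! s) \<and> (s \<ge> t + 4 \<longrightarrow> (P ! s, x) \<in> A))))"
proof -
  interpret lem A k u v P using k qt uv(3) P by unfold_locales auto
  show ?thesis using main[OF ts] by blast
qed

end
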